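(* Let $A=(A,\oplus,\odot)$ be a skew brace and $B$ a characteristic subgroup of $A_{\oplus}$ such that $A_{\oplus}^{(n)}\leq B$ for some positive integer $n$. If $\mathrm{Aut}(A_{\oplus}/B)$ is solvable of derived length $m$, then $A_{\odot}^{(m+n)}\leq B$.
   Context: A skew brace is a set $A$ with two binary operations $\oplus,\odot$ such that $A_{\oplus}=(A,\oplus)$ and $A_{\odot}=(A,\odot)$ are groups and $a\odot(b\oplus c)=(a\odot b)\ominus a\oplus(a\odot c)$ for all $a,b,c\in A$, where $\ominus a$ is the inverse of $a$ in $A_{\oplus}$. The derived series of a group $G$ is indexed by $G^{(1)}=G$, $G^{(i+1)}=[G^{(i)},G^{(i)}]$; a solvable group $G$ has derived length $m$ when $G^{(m+1)}=1$ (with $m$ minimal). *)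

theory Defs
  imports "HOL-Algebra.Algebra"
begin

text \<open>A skew brace: two group structures on the same carrier, additive group G1
  (operation oplus) and multiplicative group G2 (operation odot), with
  a odot (b oplus c) = (a odot b) ominus a oplus (a odot c).\<close>
definition skew_brace :: "('a, 'b) monoid_scheme \<Rightarrow> ('a, 'c) monoid_scheme \<Rightarrow> bool" where
  "skew_brace G1 G2 \<longleftrightarrow> group G1 \<and> group G2 \<and> carrier G1 = carrier G2 \<and>
     (\<forall>a\<in>carrier G1. \<forall>b\<in>carrier G1. \<forall>c\<in>carrier G1.
        a \<otimes>\<^bsub>G2\<^esub> (b \<otimes>\<^bsub>G1\<^esub> c)
          = ((a \<otimes>\<^bsub>G2\<^esub> b) \<otimes>\<^bsub>G1\<^esub> inv\<^bsub>G1\<^esub> a) \<otimes>\<^bsub>G1\<^esub> (a \<otimes>\<^bsub>G2\<^esub> c))"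

definition characteristic_subgroup :: "'a set \<Rightarrow> ('a, 'b) monoid_scheme \<Rightarrow> bool" where
  "characteristic_subgroup H G \<longleftrightarrow> subgroup H G \<and> (\<forall>\<phi>\<in>auto G. \<phi> ` H = H)"

text \<open>Derived series indexed as in the paper: G^(1) = G, G^(i+1) = [G^(i), G^(i)].\<close>
definition derived_term :: "('a, 'b) monoid_scheme \<Rightarrow> nat \<Rightarrow> 'a set" where
  "derived_term G i = (derived G ^^ (i - 1)) (carrier G)"

definition derived_length :: "('a, 'b) monoid_scheme \<Rightarrow> nat \<Rightarrow> bool" where
  "derived_length G m \<longleftrightarrow> solvable G \<and> derived_term G (m + 1) = {\<one>\<^bsub>G\<^esub>} \<and>
     (\<forall>k<m. derived_term G (k + 1) \<noteq> {\<one>\<^bsub>G\<^esub>})"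

end

theory Submission imports Defs begin

locale skb =
  fixes G1 :: "('a,'b) monoid_scheme" and G2 :: "('a,'c) monoid_scheme"
  assumes sb: "skew_brace G1 G2"
begin

lemma grp1: "group G1" and grp2: "group G2" and carr: "carrier G2 = carrier G1"
  using sb unfolding skew_brace_def by auto

sublocale A: group G1 by (rule grp1)
sublocale M: group G2 by (rule grp2)

lemma distr: "a \<in> carrier G1 \<Longrightarrow> b \<in> carrier G1 \<Longrightarrow> c \<in> carrier G1 \<Longrightarrow>
   a \<otimes>\<^bsub>G2\<^esub> (b \<otimes>\<^bsub>G1\<^esub> c)
          = ((a \<otimes>\<^bsub>G2\<^esub> b) \<otimes>\<^bsub>G1\<^esub> inv\<^bsub>G1\<^esub> a) \<otimes>\<^bsub>G1\<^esub> (a \<otimes>\<^bsub>G2\<^esub> c)"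
  using sb unfolding skew_brace_def by auto

definition L where "L a = (\<lambda>x\<in>carrier G1. inv\<^bsub>G1\<^esub> a \<otimes>\<^bsub>G1\<^esub> (a \<otimes>\<^bsub>G2\<^esub> x))"

lemma mclosed: "a \<in> carrier G1 \<Longrightarrow> b \<in> carrier G1 \<Longrightarrow> a \<otimes>\<^bsub>G2\<^esub> b \<in> carrier G1"
  using M.m_closed carr by auto

lemma L_closed: "a \<in> carrier G1 \<Longrightarrow> x \<in> carrier G1 \<Longrightarrow> L a x \<in> carrier G1"
  by (simp add: L_def mclosed)

lemma L_mult: "a \<in> carrier G1 \<Longrightarrow> x \<in> carrier G1 \<Longrightarrow> y \<in> carrier G1 \<Longrightarrow>
   L a (x \<otimes>\<^bsub>G1\<^esub> y) = L a x \<otimes>\<^bsub>G1\<^esub> L a y"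
  by (simp add: L_def distr mclosed A.m_assoc)

lemma L_hom: "a \<in> carrier G1 \<Longrightarrow> L a \<in> hom G1 G1"
  by (auto simp: hom_def L_closed L_mult)

lemma mult_eq: "a \<in> carrier G1 \<Longrightarrow> x \<in> carrier G1 \<Longrightarrow> a \<otimes>\<^bsub>G2\<^esub> x = a \<otimes>\<^bsub>G1\<^esub> L a x"
  by (simp add: L_def mclosed A.m_assoc[symmetric])

lemma one_eq: "\<one>\<^bsub>G2\<^esub> = \<one>\<^bsub>G1\<^esub>"
proof -
  have o2: "\<one>\<^bsub>G2\<^esub> \<in> carrier G1" using carr by auto
  interpret h: group_hom G1 G1 "L \<one>\<^bsub>G2\<^esub>" using L_hom[OF o2] by unfold_locales
  have "L \<one>\<^bsub>G2\<^esub> \<one>\<^bsub>G1\<^esub> = \<one>\<^bsub>G1\<^esub>" by simp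
  hence "inv\<^bsub>G1\<^esub> \<one>\<^bsub>G2\<^esub> \<otimes>\<^bsub>G1\<^esub> \<one>\<^bsub>G1\<^esub> = \<one>\<^bsub>G1\<^esub>"
    using o2 carr by (simp add: L_def)
  hence "inv\<^bsub>G1\<^esub> \<one>\<^bsub>G2\<^esub> = \<one>\<^bsub>G1\<^esub>" using o2 by simp
  hence "inv\<^bsub>G1\<^esub> (inv\<^bsub>G1\<^esub> \<one>\<^bsub>G2\<^esub>) = \<one>\<^bsub>G1\<^esub>" by simp
  thus ?thesis using o2 by (simp only: A.inv_inv)
qed

lemma L_one: "x \<in> carrier G1 \<Longrightarrow> L \<one>\<^bsub>G2\<^esub> x = x"
proof -
  assume x: "x \<in> carrier G1"
  have "\<one>\<^bsub>G2\<^esub> \<otimes>\<^bsub>G2\<^esub> x = x" using carr x M.l_one by auto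
  thus ?thesis using x by (simp add: L_def one_eq)
qed

lemma L_comp: "a \<in> carrier G1 \<Longrightarrow> b \<in> carrier G1 \<Longrightarrow> x \<in> carrier G1 \<Longrightarrow>
   L (a \<otimes>\<^bsub>G2\<^esub> b) x = L a (L b x)"
proof -
  assume a: "a \<in> carrier G1" and b: "b \<in> carrier G1" and x: "x \<in> carrier G1"
  interpret h: group_hom G1 G1 "L a" using L_hom[OF a] by unfold_locales
  have ib: "inv\<^bsub>G1\<^esub> b \<in> carrier G1" using b by simp
  have "L a (inv\<^bsub>G1\<^esub> b) = inv\<^bsub>G1\<^esub> (L a b)" using b by simp
  hence e: "inv\<^bsub>G1\<^esub> a \<otimes>\<^bsub>G1\<^esub> (a \<otimes>\<^bsub>G2\<^esub> inv\<^bsub>G1\<^esub> b) = inv\<^bsub>G1\<^esub> (a \<otimes>\<^bsub>G2\<^esub> b) \<otimes>\<^bsub>G1\<^esub> a"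
    using a b ib by (simp add: L_def A.inv_mult_group mclosed)
  have "L a (L b x) = inv\<^bsub>G1\<^esub> a \<otimes>\<^bsub>G1\<^esub> (((a \<otimes>\<^bsub>G2\<^esub> inv\<^bsub>G1\<^esub> b) \<otimes>\<^bsub>G1\<^esub> inv\<^bsub>G1\<^esub> a) \<otimes>\<^bsub>G1\<^esub> (a \<otimes>\<^bsub>G2\<^esub> (b \<otimes>\<^bsub>G2\<^esub> x)))"
    using a b x ib by (simp add: L_def mclosed distr)
  also have "\<dots> = (inv\<^bsub>G1\<^esub> a \<otimes>\<^bsub>G1\<^esub> (a \<otimes>\<^bsub>G2\<^esub> inv\<^bsub>G1\<^esub> b)) \<otimes>\<^bsub>G1\<^esub> inv\<^bsub>G1\<^esub> a \<otimes>\<^bsub>G1\<^esub> (a \<otimes>\<^bsub>G2\<^esub> (b \<otimes>\<^bsub>G2\<^esub> x))"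
    using a b x ib by (simp add: mclosed A.m_assoc)
  also have "\<dots> = inv\<^bsub>G1\<^esub> (a \<otimes>\<^bsub>G2\<^esub> b) \<otimes>\<^bsub>G1\<^esub> ((a \<otimes>\<^bsub>G2\<^esub> b) \<otimes>\<^bsub>G2\<^esub> x)"
    unfolding e using a b x ib carr by (simp add: mclosed A.m_assoc M.m_assoc)
  also have "\<dots> = L (a \<otimes>\<^bsub>G2\<^esub> b) x" using a b x by (simp add: L_def)
  finally show ?thesis by simp
qed

lemma L_auto: "a \<in> carrier G1 \<Longrightarrow> L a \<in> auto G1"
proof -
  assume a: "a \<in> carrier G1"
  have ia: "inv\<^bsub>G2\<^esub> a \<in> carrier G1" using a carr by (metis M.inv_closed)
  have "bij_betw (L a) (carrier G1) (carrier G1)"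
  proof (rule bij_betw_byWitness[where f'="L (inv\<^bsub>G2\<^esub> a)"])
    show "\<forall>x\<in>carrier G1. L (inv\<^bsub>G2\<^esub> a) (L a x) = x"
      using a ia carr by (simp add: L_comp[symmetric] L_one)
    show "\<forall>x\<in>carrier G1. L a (L (inv\<^bsub>G2\<^esub> a) x) = x"
      using a ia carr by (simp add: L_comp[symmetric] L_one)
  qed (use a ia L_closed in auto)
  thus ?thesis using L_hom[OF a] by (simp add: auto_def Bij_def L_def)
qed

end

locale skbB = skb +
  fixes B :: "'a set"
  assumes char: "characteristic_subgroup B G1"
begin

lemma B_sub: "subgroup B G1" using char by (simp add: characteristic_subgroup_def)

lemma B_auto: "f \<in> auto G1 \<Longrightarrow> f ` B = B" using char by (simp add: characteristic_subgroup_def)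

lemma B_normal: "B \<lhd> G1"
proof (rule A.normal_invI[OF B_sub])
  fix g h assume g: "g \<in> carrier G1" and h: "h \<in> B"
  define c where "c = (\<lambda>x\<in>carrier G1. g \<otimes>\<^bsub>G1\<^esub> x \<otimes>\<^bsub>G1\<^esub> inv\<^bsub>G1\<^esub> g)"
  define c' where "c' = (\<lambda>x\<in>carrier G1. inv\<^bsub>G1\<^esub> g \<otimes>\<^bsub>G1\<^esub> x \<otimes>\<^bsub>G1\<^esub> g)"
  have can1: "\<And>z. z \<in> carrier G1 \<Longrightarrow> inv\<^bsub>G1\<^esub> g \<otimes>\<^bsub>G1\<^esub> (g \<otimes>\<^bsub>G1\<^esub> z) = z"
    using g by (simp add: A.m_assoc[symmetric])
  have can2: "\<And>z. z \<in> carrier G1 \<Longrightarrow> g \<otimes>\<^bsub>G1\<^esub> (inv\<^bsub>G1\<^esub> g \<otimes>\<^bsub>G1\<^esub> z) = z"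
    using g by (simp add: A.m_assoc[symmetric])
  have "c \<in> hom G1 G1"
  proof (rule homI)
    fix x assume "x \<in> carrier G1" thus "c x \<in> carrier G1" using g by (simp add: c_def)
  next
    fix x y assume x: "x \<in> carrier G1" and y: "y \<in> carrier G1"
    show "c (x \<otimes>\<^bsub>G1\<^esub> y) = c x \<otimes>\<^bsub>G1\<^esub> c y"
      using g x y by (simp add: c_def A.m_assoc can1)
  qed
  moreover have "bij_betw c (carrier G1) (carrier G1)"
  proof (rule bij_betw_byWitness[where f'=c'])
    show "\<forall>x\<in>carrier G1. c' (c x) = x"
      using g by (simp add: c_def c'_def A.m_assoc can1)
    show "\<forall>x\<in>carrier G1. c (c' x) = x"
      using g by (simp add: c_def c'_def A.m_assoc can2)
    show "c ` carrier G1 \<subseteq> carrier G1" using g by (auto simp: c_def)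
    show "c' ` carrier G1 \<subseteq> carrier G1" using g by (auto simp: c'_def)
  qed
  moreover have "c \<in> extensional (carrier G1)" unfolding c_def by (rule restrict_extensional)
  ultimately have "c \<in> auto G1" unfolding auto_def Bij_def by blast
  hence "c ` B = B" by (rule B_auto)
  moreover have "h \<in> carrier G1" by (rule subgroup.mem_carrier[OF B_sub h])
  moreover have "c h \<in> c ` B" using h by (rule imageI)
  ultimately have "c h \<in> B" by simp
  moreover have "c h = g \<otimes>\<^bsub>G1\<^esub> h \<otimes>\<^bsub>G1\<^esub> inv\<^bsub>G1\<^esub> g" using \<open>h \<in> carrier G1\<close> by (simp add: c_def)
  ultimately show "g \<otimes>\<^bsub>G1\<^esub> h \<otimes>\<^bsub>G1\<^esub> inv\<^bsub>G1\<^esub> g \<in> B" by simp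
qed

interpretation N: normal B G1 by (rule B_normal)

lemma img_coset: "f \<in> auto G1 \<Longrightarrow> x \<in> carrier G1 \<Longrightarrow> f ` (B #>\<^bsub>G1\<^esub> x) = B #>\<^bsub>G1\<^esub> f x"
proof -
  assume f: "f \<in> auto G1" and x: "x \<in> carrier G1"
  have fh: "f \<in> hom G1 G1" using f by (simp add: auto_def)
  have "f ` (B #>\<^bsub>G1\<^esub> x) = (\<lambda>b. f b \<otimes>\<^bsub>G1\<^esub> f x) ` B"
  proof -
    have "f ` (B #>\<^bsub>G1\<^esub> x) = (\<lambda>b. f (b \<otimes>\<^bsub>G1\<^esub> x)) ` B"
      unfolding r_coset_def by blast
    also have "\<dots> = (\<lambda>b. f b \<otimes>\<^bsub>G1\<^esub> f x) ` B"
    proof (rule image_cong[OF refl])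
      fix b assume "b \<in> B" hence "b \<in> carrier G1" using N.subset by auto
      thus "f (b \<otimes>\<^bsub>G1\<^esub> x) = f b \<otimes>\<^bsub>G1\<^esub> f x" using x fh by (simp add: hom_mult)
    qed
    finally show ?thesis .
  qed
  also have "\<dots> = (\<lambda>b. b \<otimes>\<^bsub>G1\<^esub> f x) ` (f ` B)" by (simp add: image_image)
  also have "\<dots> = B #>\<^bsub>G1\<^esub> f x" unfolding B_auto[OF f] r_coset_def by blast
  finally show ?thesis .
qed

definition Phi where "Phi a = (\<lambda>C\<in>rcosets\<^bsub>G1\<^esub> B. L a ` C)"

lemma carrQ: "carrier (G1 Mod B) = rcosets\<^bsub>G1\<^esub> B" by (simp add: FactGroup_def)

lemma Phi_coset: "a \<in> carrier G1 \<Longrightarrow> x \<in> carrier G1 \<Longrightarrow> Phi a (B #>\<^bsub>G1\<^esub> x) = B #>\<^bsub>G1\<^esub> L a x"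
  using A.rcosetsI[OF N.subset] by (simp add: Phi_def img_coset L_auto)

lemma rcosetsE: "C \<in> rcosets\<^bsub>G1\<^esub> B \<Longrightarrow> (\<And>x. x \<in> carrier G1 \<Longrightarrow> C = B #>\<^bsub>G1\<^esub> x \<Longrightarrow> P) \<Longrightarrow> P"
  unfolding RCOSETS_def by auto

lemma Phi_comp: "a \<in> carrier G1 \<Longrightarrow> b \<in> carrier G1 \<Longrightarrow> C \<in> rcosets\<^bsub>G1\<^esub> B \<Longrightarrow>
   Phi (a \<otimes>\<^bsub>G2\<^esub> b) C = Phi a (Phi b C)"
  by (erule rcosetsE) (simp add: Phi_coset L_comp L_closed mclosed)

lemma Phi_closed: "a \<in> carrier G1 \<Longrightarrow> C \<in> rcosets\<^bsub>G1\<^esub> B \<Longrightarrow> Phi a C \<in> rcosets\<^bsub>G1\<^esub> B"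
  by (erule rcosetsE) (simp add: Phi_coset L_closed A.rcosetsI[OF N.subset])

lemma Phi_one: "C \<in> rcosets\<^bsub>G1\<^esub> B \<Longrightarrow> Phi \<one>\<^bsub>G2\<^esub> C = C"
proof -
  have o: "\<one>\<^bsub>G2\<^esub> \<in> carrier G1" using M.one_closed carr by simp
  assume "C \<in> rcosets\<^bsub>G1\<^esub> B"
  then show ?thesis by (rule rcosetsE) (simp add: o Phi_coset L_one)
qed

lemma Phi_auto: "a \<in> carrier G1 \<Longrightarrow> Phi a \<in> auto (G1 Mod B)"
proof -
  assume a: "a \<in> carrier G1"
  have ia: "inv\<^bsub>G2\<^esub> a \<in> carrier G1" using a carr by (metis M.inv_closed)
  have "Phi a \<in> hom (G1 Mod B) (G1 Mod B)"
  proof (rule homI)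
    fix C assume "C \<in> carrier (G1 Mod B)" thus "Phi a C \<in> carrier (G1 Mod B)"
      using a by (simp add: carrQ Phi_closed)
  next
    fix C D assume C: "C \<in> carrier (G1 Mod B)" and D: "D \<in> carrier (G1 Mod B)"
    from C obtain x where x: "x \<in> carrier G1" "C = B #>\<^bsub>G1\<^esub> x" by (auto simp: carrQ elim: rcosetsE)
    from D obtain y where y: "y \<in> carrier G1" "D = B #>\<^bsub>G1\<^esub> y" by (auto simp: carrQ elim: rcosetsE)
    show "Phi a (C \<otimes>\<^bsub>G1 Mod B\<^esub> D) = Phi a C \<otimes>\<^bsub>G1 Mod B\<^esub> Phi a D"
      using a x y by (simp add: N.rcos_sum Phi_coset L_closed L_mult)
  qed
  moreover have "bij_betw (Phi a) (rcosets\<^bsub>G1\<^esub> B) (rcosets\<^bsub>G1\<^esub> B)"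
  proof (rule bij_betw_byWitness[where f'="Phi (inv\<^bsub>G2\<^esub> a)"])
    show "\<forall>x\<in>rcosets\<^bsub>G1\<^esub> B. Phi (inv\<^bsub>G2\<^esub> a) (Phi a x) = x"
      using a ia carr by (simp add: Phi_comp[symmetric] Phi_one)
    show "\<forall>x\<in>rcosets\<^bsub>G1\<^esub> B. Phi a (Phi (inv\<^bsub>G2\<^esub> a) x) = x"
      using a ia carr by (simp add: Phi_comp[symmetric] Phi_one)
  qed (use a ia Phi_closed in auto)
  ultimately show ?thesis by (simp add: auto_def Bij_def Phi_def carrQ)
qed

lemma Q_group: "group (G1 Mod B)" by (rule N.factorgroup_is_group)

lemma Phi_hom: "Phi \<in> hom G2 (AutoGroup (G1 Mod B))"
proof (rule homI)
  fix a assume "a \<in> carrier G2" thus "Phi a \<in> carrier (AutoGroup (G1 Mod B))"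
    using carr by (simp add: AutoGroup_def Phi_auto)
next
  fix a b assume a: "a \<in> carrier G2" and b: "b \<in> carrier G2"
  have aa: "Phi a \<in> Bij (rcosets\<^bsub>G1\<^esub> B)" "Phi b \<in> Bij (rcosets\<^bsub>G1\<^esub> B)"
    using a b carr Phi_auto by (auto simp: auto_def carrQ)
  have a1: "a \<in> carrier G1" and b1: "b \<in> carrier G1" using a b carr by auto
  have "Phi a \<otimes>\<^bsub>AutoGroup (G1 Mod B)\<^esub> Phi b = compose (rcosets\<^bsub>G1\<^esub> B) (Phi a) (Phi b)"
    using aa by (simp add: AutoGroup_def BijGroup_def carrQ)
  also have "\<dots> = Phi (a \<otimes>\<^bsub>G2\<^esub> b)"
  proof (rule ext)
    fix C show "compose (rcosets\<^bsub>G1\<^esub> B) (Phi a) (Phi b) C = Phi (a \<otimes>\<^bsub>G2\<^esub> b) C"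
      by (cases "C \<in> rcosets\<^bsub>G1\<^esub> B") (simp_all add: compose_def Phi_comp a1 b1, simp add: Phi_def)
  qed
  finally show "Phi (a \<otimes>\<^bsub>G2\<^esub> b) = Phi a \<otimes>\<^bsub>AutoGroup (G1 Mod B)\<^esub> Phi b" by simp
qed

lemma Phi_trivial:
  assumes "derived_length (AutoGroup (G1 Mod B)) m"
    and a: "a \<in> (derived G2 ^^ m) (carrier G2)" and x: "x \<in> carrier G1"
  shows "B #>\<^bsub>G1\<^esub> L a x = B #>\<^bsub>G1\<^esub> x"
proof -
  interpret Q: group "G1 Mod B" by (rule Q_group)
  interpret AG: group "AutoGroup (G1 Mod B)" by (rule Q.AutoGroup)
  interpret h: group_hom G2 "AutoGroup (G1 Mod B)" Phi
    using Phi_hom by unfold_locales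
  have "Phi a \<in> Phi ` (derived G2 ^^ m) (carrier G2)" using a by blast
  also have "\<dots> = (derived (AutoGroup (G1 Mod B)) ^^ m) (Phi ` carrier G2)"
    by (simp add: h.exp_of_derived_img)
  also have "\<dots> \<subseteq> (derived (AutoGroup (G1 Mod B)) ^^ m) (carrier (AutoGroup (G1 Mod B)))"
    by (rule AG.mono_exp_of_derived) (use h.hom_closed in auto)
  also have "\<dots> = {\<one>\<^bsub>AutoGroup (G1 Mod B)\<^esub>}"
    using assms(1) by (simp add: derived_length_def derived_term_def)
  finally have "Phi a = (\<lambda>C\<in>rcosets\<^bsub>G1\<^esub> B. C)"
    by (simp add: AutoGroup_def BijGroup_def carrQ)
  hence "Phi a (B #>\<^bsub>G1\<^esub> x) = B #>\<^bsub>G1\<^esub> x" using x A.rcosetsI[OF N.subset] by simp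
  moreover have "a \<in> carrier G1"
    using a M.exp_of_derived_in_carrier[of "carrier G2" m] carr by auto
  ultimately show ?thesis using x by (simp add: Phi_coset)
qed

end


lemma (in group) exp_derived_consistent:
  assumes "subgroup K G"
  shows "(derived (G\<lparr>carrier := K\<rparr>) ^^ j) K = (derived G ^^ j) K \<and> (derived G ^^ j) K \<subseteq> K"
proof (induction j)
  case 0 then show ?case by simp
next
  case (Suc j)
  then show ?case using derived_consistent[OF _ assms] derived_incl[OF _ assms] by simp
qed

theorem corollary3p2:
  fixes G1 :: "('a, 'b) monoid_scheme" and G2 :: "('a, 'c) monoid_scheme"
    and B :: "'a set" and n m :: nat
  assumes "skew_brace G1 G2"
    and "characteristic_subgroup B G1"
    and "n \<ge> 1"
    and "derived_term G1 n \<subseteq> B"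
    and "derived_length (AutoGroup (G1 Mod B)) m"
  shows "derived_term G2 (m + n) \<subseteq> B"
proof -
  interpret skbB G1 G2 B using assms(1,2) by (simp add: skb_def skbB_def skbB_axioms_def)
  interpret N: normal B G1 by (rule B_normal)
  interpret Q: group "G1 Mod B" by (rule Q_group)
  define K where "K = (derived G2 ^^ m) (carrier G2)"
  have Ksub: "subgroup K G2" unfolding K_def by (rule M.exp_of_derived_is_subgroup[OF M.subgroup_self])
  have Kc: "K \<subseteq> carrier G1" using subgroup.subset[OF Ksub] carr by simp
  interpret KG: group "G2\<lparr>carrier := K\<rparr>" by (rule subgroup.subgroup_is_group[OF Ksub grp2])
  define psi where "psi = (\<lambda>a. B #>\<^bsub>G1\<^esub> a)"
  have psi_hom: "psi \<in> hom (G2\<lparr>carrier := K\<rparr>) (G1 Mod B)"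
  proof (rule homI)
    fix a assume "a \<in> carrier (G2\<lparr>carrier := K\<rparr>)"
    thus "psi a \<in> carrier (G1 Mod B)" using Kc by (auto simp: psi_def carrQ intro!: A.rcosetsI[OF N.subset])
  next
    fix a b assume a: "a \<in> carrier (G2\<lparr>carrier := K\<rparr>)" and b: "b \<in> carrier (G2\<lparr>carrier := K\<rparr>)"
    have a1: "a \<in> carrier G1" "a \<in> K" and b1: "b \<in> carrier G1" "b \<in> K" using a b Kc by auto
    have "B #>\<^bsub>G1\<^esub> L a b = B #>\<^bsub>G1\<^esub> b"
      using Phi_trivial[OF assms(5)] a1 b1 unfolding K_def by blast
    hence "B #>\<^bsub>G1\<^esub> (a \<otimes>\<^bsub>G2\<^esub> b) = (B #>\<^bsub>G1\<^esub> a) <#>\<^bsub>G1\<^esub> (B #>\<^bsub>G1\<^esub> b)"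
      using a1 b1 by (simp add: mult_eq N.rcos_sum[symmetric] L_closed)
    then show "psi (a \<otimes>\<^bsub>G2\<lparr>carrier := K\<rparr>\<^esub> b) = psi a \<otimes>\<^bsub>G1 Mod B\<^esub> psi b"
      by (simp add: psi_def)
  qed
  interpret hp: group_hom "G2\<lparr>carrier := K\<rparr>" "G1 Mod B" psi using psi_hom by unfold_locales
  interpret nu: group_hom G1 "G1 Mod B" psi using N.r_coset_hom_Mod unfolding psi_def by unfold_locales
  have "derived_term G2 (m + n) = (derived G2 ^^ (n - 1)) K"
  proof -
    have e: "m + n - 1 = (n - 1) + m" using assms(3) by simp
    show ?thesis unfolding derived_term_def K_def e funpow_add by simp
  qed
  also have "\<dots> = (derived (G2\<lparr>carrier := K\<rparr>) ^^ (n - 1)) K"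
    using M.exp_derived_consistent[OF Ksub] by simp
  finally have eq: "derived_term G2 (m + n) = (derived (G2\<lparr>carrier := K\<rparr>) ^^ (n - 1)) K" .
  show ?thesis
  proof
    fix a assume "a \<in> derived_term G2 (m + n)"
    hence aK: "a \<in> (derived (G2\<lparr>carrier := K\<rparr>) ^^ (n - 1)) K" using eq by simp
    hence ac: "a \<in> carrier G1"
      using KG.exp_of_derived_in_carrier[of K "n - 1"] Kc by auto
    have "psi a \<in> psi ` (derived (G2\<lparr>carrier := K\<rparr>) ^^ (n - 1)) K" using aK by blast
    also have "\<dots> = (derived (G1 Mod B) ^^ (n - 1)) (psi ` K)"
      by (simp add: hp.exp_of_derived_img)
    also have "\<dots> \<subseteq> (derived (G1 Mod B) ^^ (n - 1)) (psi ` carrier G1)"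
      by (rule Q.mono_exp_of_derived) (use Kc in auto)
    also have "\<dots> = psi ` (derived G1 ^^ (n - 1)) (carrier G1)"
      by (simp add: nu.exp_of_derived_img)
    also have "\<dots> \<subseteq> psi ` B" using assms(4) by (auto simp: derived_term_def)
    also have "\<dots> \<subseteq> {B}" unfolding psi_def using N.rcos_const[OF grp1] by auto
    finally have "B #>\<^bsub>G1\<^esub> a = B" by (simp add: psi_def)
    thus "a \<in> B" using A.rcos_self[OF ac B_sub] by simp
  qed
qed

end
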